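(* Let $p$ be a prime and $d>1$ an integer. Let $T_d$ be the $d$-th Chebyshev polynomial of the first kind, viewed as a self-map of $\mathbb{A}^1(\mathbb{F}_p)=\mathbb{F}_p$. Then $$\max_{x\in\mathbb{F}_p}t(T_d,x)=\max_q\left(\max\left(\left\lceil\frac{v_q(p-1)}{v_q(d)}\right\rceil,\left\lceil\frac{v_q(p+1)}{v_q(d)}\right\rceil\right)\right),$$ where $q$ ranges over the prime divisors of $d$ and $v_q$ is the $q$-adic valuation.
   Context: The $d$-th Chebyshev polynomial of the first kind $T_d\in\mathbb{Z}[z]$ is the monic degree-$d$ polynomial with $T_d(z+z^{-1})=z^d+z^{-d}$, reduced modulo $p$. For a self-map $f$ of a finite set and a point $x$, the tail $t(f,x)$ is the least integer $m\ge0$ such that $f^m(x)$ is periodic. *)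

theory Defs
  imports "HOL-Computational_Algebra.Computational_Algebra"
begin

text \<open>Chebyshev polynomials of the first kind in the normalisation of the paper:
  monic, T_d(z + 1/z) = z^d + z^(-d).  Recurrence T_0 = 2, T_1 = z,
  T_(n+2) = z T_(n+1) - T_n.\<close>
fun cheb :: "nat \<Rightarrow> int poly" where
  "cheb 0 = [:2:]"
| "cheb (Suc 0) = [:0, 1:]"
| "cheb (Suc (Suc n)) = [:0, 1:] * cheb (Suc n) - cheb n"

definition cheb_map :: "nat \<Rightarrow> nat \<Rightarrow> int \<Rightarrow> int" where
  "cheb_map p d x = poly (cheb d) x mod int p"

definition periodic_pt :: "('a \<Rightarrow> 'a) \<Rightarrow> 'a \<Rightarrow> bool" where
  "periodic_pt f y \<longleftrightarrow> (\<exists>n>0. (f ^^ n) y = y)"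

definition tail :: "('a \<Rightarrow> 'a) \<Rightarrow> 'a \<Rightarrow> nat" where
  "tail f x = (LEAST m. periodic_pt f ((f ^^ m) x))"

end

theory Submission imports Defs "HOL-Number_Theory.Number_Theory" "HOL-Algebra.Multiplicative_Group" begin

definition mulZ :: "int \<Rightarrow> int \<times> int \<Rightarrow> int \<times> int \<Rightarrow> int \<times> int" where
  "mulZ n u v = (fst u * fst v + n * snd u * snd v, fst u * snd v + snd u * fst v)"
definition addZ :: "int \<times> int \<Rightarrow> int \<times> int \<Rightarrow> int \<times> int" where
  "addZ u v = (fst u + fst v, snd u + snd v)"
definition red :: "int \<Rightarrow> int \<times> int \<Rightarrow> int \<times> int" where
  "red P u = (fst u mod P, snd u mod P)"

definition FF :: "int \<Rightarrow> int \<Rightarrow> (int \<times> int) ring" where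
  "FF P n = \<lparr>carrier = {0..<P} \<times> {0..<P},
     mult = (\<lambda>u v. red P (mulZ n u v)),
     one = (1, 0),
     zero = (0, 0),
     add = (\<lambda>u v. red P (addZ u v))\<rparr>"

lemma FF_simps:
  "carrier (FF P n) = {0..<P} \<times> {0..<P}"
  "(u \<otimes>\<^bsub>FF P n\<^esub> v) = red P (mulZ n u v)"
  "\<one>\<^bsub>FF P n\<^esub> = (1, 0)"
  "\<zero>\<^bsub>FF P n\<^esub> = (0, 0)"
  "(u \<oplus>\<^bsub>FF P n\<^esub> v) = red P (addZ u v)"
  by (simp_all add: FF_def)

lemma red_mulZ_left: "red P (mulZ n (red P u) v) = red P (mulZ n u v)"
  unfolding red_def mulZ_def
  by (simp add: cong_def[symmetric] cong_add cong_mult cong_mod_left)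
lemma red_mulZ_right: "red P (mulZ n u (red P v)) = red P (mulZ n u v)"
  unfolding red_def mulZ_def
  by (simp add: cong_def[symmetric] cong_add cong_mult cong_mod_left)
lemma red_addZ_left: "red P (addZ (red P u) v) = red P (addZ u v)"
  unfolding red_def addZ_def
  by (simp add: cong_def[symmetric] cong_add cong_mult cong_mod_left)
lemma red_addZ_right: "red P (addZ u (red P v)) = red P (addZ u v)"
  unfolding red_def addZ_def
  by (simp add: cong_def[symmetric] cong_add cong_mult cong_mod_left)
lemma mulZ_assoc: "mulZ n (mulZ n u v) w = mulZ n u (mulZ n v w)"
  unfolding mulZ_def by (simp add: algebra_simps)
lemma mulZ_comm: "mulZ n u v = mulZ n v u"
  unfolding mulZ_def by (simp add: algebra_simps)
lemma addZ_assoc: "addZ (addZ u v) w = addZ u (addZ v w)"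
  unfolding addZ_def by (simp add: algebra_simps)
lemma addZ_comm: "addZ u v = addZ v u"
  unfolding addZ_def by (simp add: algebra_simps)
lemma distribZ: "mulZ n (addZ u v) w = addZ (mulZ n u w) (mulZ n v w)"
  unfolding mulZ_def addZ_def by (simp add: algebra_simps)
lemma red_id: "u \<in> {0..<P} \<times> {0..<P} \<Longrightarrow> red P u = u"
  by (cases u) (auto simp: red_def)
lemma red_in: "P > 0 \<Longrightarrow> red P u \<in> {0..<P} \<times> {0..<P}"
  by (auto simp: red_def)

lemma FF_cring:
  assumes "P > 1"
  shows "cring (FF P n)"
proof (rule cringI)
  show "abelian_group (FF P n)"
  proof (rule abelian_groupI)
    fix x assume "x \<in> carrier (FF P n)"
    then show "\<exists>y\<in>carrier (FF P n). y \<oplus>\<^bsub>FF P n\<^esub> x = \<zero>\<^bsub>FF P n\<^esub>"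
      using assms
      by (intro bexI[of _ "((- fst x) mod P, (- snd x) mod P)"])
         (auto simp: FF_simps red_def addZ_def mod_simps)
  next
    fix x y z assume "x \<in> carrier (FF P n)" "y \<in> carrier (FF P n)" "z \<in> carrier (FF P n)"
    show "x \<oplus>\<^bsub>FF P n\<^esub> y \<oplus>\<^bsub>FF P n\<^esub> z = x \<oplus>\<^bsub>FF P n\<^esub> (y \<oplus>\<^bsub>FF P n\<^esub> z)"
      by (simp add: FF_simps red_addZ_left red_addZ_right addZ_assoc)
  qed (use assms in \<open>auto simp: FF_simps red_def addZ_def ac_simps\<close>)
  show "comm_monoid (FF P n)"
  proof (rule comm_monoidI)
    fix x y z assume "x \<in> carrier (FF P n)" "y \<in> carrier (FF P n)" "z \<in> carrier (FF P n)"
    show "x \<otimes>\<^bsub>FF P n\<^esub> y \<otimes>\<^bsub>FF P n\<^esub> z = x \<otimes>\<^bsub>FF P n\<^esub> (y \<otimes>\<^bsub>FF P n\<^esub> z)"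
      by (simp add: FF_simps red_mulZ_left red_mulZ_right mulZ_assoc)
  next
    fix x y assume "x \<in> carrier (FF P n)" "y \<in> carrier (FF P n)"
    show "x \<otimes>\<^bsub>FF P n\<^esub> y = y \<otimes>\<^bsub>FF P n\<^esub> x"
      by (simp add: FF_simps mulZ_comm)
  qed (use assms in \<open>auto simp: FF_simps red_def mulZ_def\<close>)
  fix x y z assume "x \<in> carrier (FF P n)" "y \<in> carrier (FF P n)" "z \<in> carrier (FF P n)"
  show "(x \<oplus>\<^bsub>FF P n\<^esub> y) \<otimes>\<^bsub>FF P n\<^esub> z = x \<otimes>\<^bsub>FF P n\<^esub> z \<oplus>\<^bsub>FF P n\<^esub> y \<otimes>\<^bsub>FF P n\<^esub> z"
    by (simp add: FF_simps red_mulZ_left red_addZ_left red_addZ_right distribZ)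
qed

lemma fermat_int:
  assumes "prime p" "\<not> int p dvd a"
  shows "[a ^ (p - 1) = 1] (mod int p)"
proof -
  define b where "b = nat (a mod int p)"
  have p0: "int p > 0" using assms prime_gt_0_nat by auto
  have bi: "int b = a mod int p" using p0 by (simp add: b_def)
  have "\<not> p dvd b"
  proof
    assume "p dvd b"
    then have "int p dvd int b" by simp
    then have "int p dvd a" using bi by (simp add: dvd_mod_iff)
    then show False using assms by simp
  qed
  then have "[b ^ (p - 1) = 1] (mod p)" using fermat_theorem assms by blast
  then have "[int b ^ (p - 1) = 1] (mod int p)"
    by (metis cong_int_iff of_nat_1 of_nat_power)
  moreover have "[int b ^ (p - 1) = a ^ (p - 1)] (mod int p)"
    using bi by (intro cong_pow) (simp add: cong_def)
  ultimately show ?thesis by (meson cong_sym cong_trans)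
qed

lemma fermat_int2:
  assumes "prime p"
  shows "[a ^ p = a] (mod int p)"
proof (cases "int p dvd a")
  case True
  then have "int p dvd a ^ p" using assms prime_gt_0_nat
    by (meson dvd_power dvd_trans order_refl prime_gt_0_nat)
  then show ?thesis using True by (simp add: cong_def dvd_imp_mod_0)
next
  case False
  then have "[a ^ (p - 1) * a = 1 * a] (mod int p)" using fermat_int[OF assms] cong_scalar_right by blast
  moreover have "a ^ (p - 1) * a = a ^ p" using assms prime_gt_0_nat
    by (metis Suc_diff_1 power_Suc2)
  ultimately show ?thesis by simp
qed

fun powZ :: "int \<Rightarrow> int \<times> int \<Rightarrow> nat \<Rightarrow> int \<times> int" where
  "powZ n u 0 = (1, 0)"
| "powZ n u (Suc k) = mulZ n (powZ n u k) u"

definition Hz :: "int \<Rightarrow> int poly \<Rightarrow> int \<times> int" where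
  "Hz n f = foldr (\<lambda>c acc. addZ (c, 0) (mulZ n (0, 1) acc)) (coeffs f) (0, 0)"

lemma Hz_0 [simp]: "Hz n 0 = (0, 0)"
  by (simp add: Hz_def)

lemma Hz_pCons: "Hz n (pCons c f) = addZ (c, 0) (mulZ n (0, 1) (Hz n f))"
proof (cases "c = 0 \<and> f = 0")
  case True
  then show ?thesis by (simp add: Hz_def addZ_def mulZ_def)
next
  case False
  then have "coeffs (pCons c f) = c # coeffs f"
    by (auto simp: cCons_def)
  then show ?thesis by (simp add: Hz_def)
qed

lemma Hz_add: "Hz n (f + g) = addZ (Hz n f) (Hz n g)"
proof (induction f g rule: poly_induct2)
  case 0
  then show ?case by (simp add: addZ_def)
next
  case (pCons a p b q)
  then show ?case by (simp add: Hz_pCons addZ_def mulZ_def algebra_simps)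
qed

lemma Hz_smult: "Hz n (Polynomial.smult c g) = mulZ n (c, 0) (Hz n g)"
proof (induction g)
  case 0
  then show ?case by (simp add: mulZ_def)
next
  case (pCons a p)
  then show ?case by (simp add: Hz_pCons addZ_def mulZ_def algebra_simps)
qed

lemma Hz_mult: "Hz n (f * g) = mulZ n (Hz n f) (Hz n g)"
proof (induction f)
  case 0
  then show ?case by (simp add: mulZ_def)
next
  case (pCons a p)
  have "Hz n (pCons a p * g) = addZ (mulZ n (a, 0) (Hz n g)) (mulZ n (0, 1) (Hz n (p * g)))"
    by (simp add: Hz_add Hz_smult Hz_pCons addZ_def mulZ_def)
  then show ?case using pCons by (simp add: Hz_pCons addZ_def mulZ_def algebra_simps)
qed

lemma Hz_const: "Hz n [:c:] = (c, 0)"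
  by (simp add: Hz_pCons addZ_def mulZ_def)

lemma Hz_one: "Hz n 1 = (1, 0)"
  using Hz_const[of n 1] by (simp add: one_pCons)

lemma Hz_power: "Hz n (f ^ k) = powZ n (Hz n f) k"
  by (induction k) (simp_all add: Hz_mult Hz_one mulZ_def mult.commute)

lemma Hz_lin: "Hz n [:a, b:] = (a, b)"
  by (simp add: Hz_pCons addZ_def mulZ_def)

lemma Hz_of_nat: "Hz n (of_nat k) = (int k, 0)"
  by (simp add: of_nat_poly Hz_const)

lemma powZ_real: "powZ n (a, 0) k = (a ^ k, 0)"
  by (induction k) (simp_all add: mulZ_def)

lemma powZ_imag: "powZ n (0, b) k = (if even k then (b ^ k * n ^ (k div 2), 0) else (0, b ^ k * n ^ (k div 2)))"
  by (induction k) (auto simp: mulZ_def elim: oddE)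

lemma binomial_prime:
  fixes x y :: "'a :: comm_semiring_1"
  assumes "prime p"
  shows "\<exists>W. (x + y) ^ p = x ^ p + y ^ p + of_nat p * W"
proof -
  have p0: "p > 0" using assms prime_gt_0_nat by blast
  have "(x + y) ^ p = (\<Sum>k\<le>p. of_nat (p choose k) * x ^ k * y ^ (p - k))"
    by (rule binomial_ring)
  also have "{..p} = insert p (insert 0 {1..<p})" using p0 by auto
  also have "(\<Sum>k\<in>insert p (insert 0 {1..<p}). of_nat (p choose k) * x ^ k * y ^ (p - k)) =
      x ^ p + (y ^ p + (\<Sum>k\<in>{1..<p}. of_nat (p choose k) * x ^ k * y ^ (p - k)))"
    using p0 by (simp add: sum.insert)
  also have "(\<Sum>k\<in>{1..<p}. of_nat (p choose k) * x ^ k * y ^ (p - k)) =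
      (\<Sum>k\<in>{1..<p}. of_nat p * (of_nat ((p choose k) div p) * x ^ k * y ^ (p - k)))"
  proof (rule sum.cong)
    fix k assume "k \<in> {1..<p}"
    then have "p dvd (p choose k)" using dvd_choose_prime[of k p] assms p0 by auto
    then have "(p choose k) = p * ((p choose k) div p)" by simp
    then have "(of_nat (p choose k) :: 'a) = of_nat p * of_nat ((p choose k) div p)"
      by (metis of_nat_mult)
    then show "of_nat (p choose k) * x ^ k * y ^ (p - k) =
      of_nat p * (of_nat ((p choose k) div p) * x ^ k * y ^ (p - k))"
      by (simp add: mult.assoc)
  qed simp
  also have "\<dots> = of_nat p * (\<Sum>k\<in>{1..<p}. of_nat ((p choose k) div p) * x ^ k * y ^ (p - k))"
    by (simp add: sum_distrib_left)
  finally show ?thesis by (auto simp: add.assoc)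
qed

locale qf =
  fixes p :: nat and n :: int
  assumes prime: "prime p" and p2: "p > 2" and nr: "[n ^ ((p - 1) div 2) = - 1] (mod int p)"
begin

abbreviation "P \<equiv> int p"
abbreviation "F \<equiv> FF (int p) n"

lemma P1: "P > 1" using p2 by simp

lemma frob_Z: "red P (powZ n (a, b) p) = red P (a, - b)"
proof -
  obtain W where W: "[:a:] ^ p + [:0, b:] ^ p + of_nat p * W = ([:a:] + [:0, b:]) ^ p"
    using binomial_prime[OF prime, of "[:a:]" "[:0, b:]"] by metis
  have ab: "[:a:] + [:0, b:] = [:a, b:]" by simp
  have "powZ n (a, b) p = Hz n ([:a, b:] ^ p)" by (simp add: Hz_power Hz_lin)
  also have "\<dots> = Hz n ([:a:] ^ p + [:0, b:] ^ p + of_nat p * W)" using W ab by simp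
  also have "\<dots> = addZ (addZ (a ^ p, 0) (powZ n (0, b) p)) (mulZ n (int p, 0) (Hz n W))"
    by (simp add: Hz_add Hz_power Hz_mult Hz_const Hz_lin Hz_of_nat powZ_real)
  finally have eq: "powZ n (a, b) p = \<dots>" .
  have op: "odd p" using p2 prime prime_odd_nat by blast
  then have "powZ n (0, b) p = (0, b ^ p * n ^ ((p - 1) div 2))"
  proof -
    have "p div 2 = (p - 1) div 2" using op by (auto elim: oddE)
    then show ?thesis using op by (simp add: powZ_imag)
  qed
  then have eq2: "powZ n (a, b) p = (a ^ p + P * fst (Hz n W), b ^ p * n ^ ((p - 1) div 2) + P * snd (Hz n W))"
    using eq by (simp add: addZ_def mulZ_def)
  have c1: "[a ^ p + P * fst (Hz n W) = a] (mod P)"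
    using fermat_int2[OF prime, of a] by (simp add: cong_def)
  have "[b ^ p * n ^ ((p - 1) div 2) = b * (- 1)] (mod P)"
    using fermat_int2[OF prime, of b] nr by (rule cong_mult)
  then have c2: "[b ^ p * n ^ ((p - 1) div 2) + P * snd (Hz n W) = - b] (mod P)"
    by (simp add: cong_def)
  show ?thesis using c1 c2 eq2 by (simp add: red_def cong_def)
qed

lemma odd_p: "odd p" using p2 prime prime_odd_nat by blast

lemma primeP: "prime P" using prime by simp

lemma in_range_dvd: "x \<in> {0..<P} \<Longrightarrow> P dvd x \<Longrightarrow> x = 0"
  by (auto simp: zdvd_not_zless dest: zdvd_imp_le)

lemma norm_nz:
  assumes "a \<in> {0..<P}" "b \<in> {0..<P}" "(a, b) \<noteq> (0, 0)"
  shows "\<not> P dvd (a ^ 2 - n * b ^ 2)"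
proof
  assume H: "P dvd (a ^ 2 - n * b ^ 2)"
  define m where "m = (p - 1) div 2"
  have m2: "2 * m = p - 1" using odd_p by (simp add: m_def)
  have m1: "m \<ge> 1" using p2 by (simp add: m_def)
  show False
  proof (cases "P dvd b")
    case True
    then have b0: "b = 0" using assms in_range_dvd by blast
    then have "P dvd a ^ 2" using H by simp
    then have "P dvd a" using primeP prime_dvd_power by blast
    then have "a = 0" using assms in_range_dvd by blast
    then show False using b0 assms by simp
  next
    case False
    have c: "[a ^ 2 = n * b ^ 2] (mod P)" using H by (simp add: cong_iff_dvd_diff)
    have "[(a ^ 2) ^ m = (n * b ^ 2) ^ m] (mod P)" using c by (rule cong_pow)
    then have c2: "[a ^ (p - 1) = n ^ m * b ^ (p - 1)] (mod P)"
      by (simp add: power_mult[symmetric] power_mult_distrib m2)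
    have bb: "[b ^ (p - 1) = 1] (mod P)" using fermat_int prime False by blast
    have nb: "[n ^ m * b ^ (p - 1) = - 1 * 1] (mod P)" using nr bb unfolding m_def by (rule cong_mult)
    have am: "[a ^ (p - 1) = - 1] (mod P)" using c2 nb by (simp add: cong_trans)
    show False
    proof (cases "P dvd a")
      case True
      have "p - 1 \<noteq> 0" using p2 by simp
      then have "P dvd a ^ (p - 1)" using True by (meson dvd_power dvd_trans gr0I)
      then have "P dvd -1" using am by (metis cong_dvd_iff)
      then show False using P1 by simp
    next
      case False
      have "[a ^ (p - 1) = 1] (mod P)" using fermat_int prime False by blast
      then have "[1 = - 1] (mod P)" using am by (meson cong_sym cong_trans)
      then have "P dvd 2" by (simp add: cong_iff_dvd_diff)
      then show False using p2 by (metis zdvd_imp_le int_ops(3) less_le_not_le of_nat_le_iff zero_less_numeral numeral_le_iff not_less)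
    qed
  qed
qed

lemma F_field: "field F"
proof -
  interpret cring F using FF_cring P1 .
  show ?thesis
  proof (rule cring_fieldI2)
    show "\<zero>\<^bsub>F\<^esub> \<noteq> \<one>\<^bsub>F\<^esub>" by (simp add: FF_simps)
  next
    fix u assume u: "u \<in> carrier F" "u \<noteq> \<zero>\<^bsub>F\<^esub>"
    obtain a b where ab: "u = (a, b)" by force
    have "\<not> P dvd (a ^ 2 - n * b ^ 2)" using norm_nz u ab by (auto simp: FF_simps)
    then have "coprime P (a ^ 2 - n * b ^ 2)" using primeP by (simp add: prime_imp_coprime)
    then have "coprime (a ^ 2 - n * b ^ 2) P" by (simp add: coprime_commute)
    then obtain c where c: "[(a ^ 2 - n * b ^ 2) * c = 1] (mod P)" using cong_solve_coprime_int by blast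
    have "u \<otimes>\<^bsub>F\<^esub> red P (a * c, - b * c) = red P ((a ^ 2 - n * b ^ 2) * c, 0)"
      by (simp add: FF_simps red_mulZ_right ab) (simp add: mulZ_def power2_eq_square algebra_simps)
    also have "\<dots> = \<one>\<^bsub>F\<^esub>" using c P1 by (simp add: red_def cong_def FF_simps)
    finally show "\<exists>v\<in>carrier F. u \<otimes>\<^bsub>F\<^esub> v = \<one>\<^bsub>F\<^esub>"
      using P1 red_in[of P] by (intro bexI[of _ "red P (a * c, - b * c)"]) (auto simp: FF_simps)
  qed
qed

end

sublocale qf \<subseteq> K: field "FF (int p) n" by (rule F_field)

context qf
begin

lemma Fpow: "u \<in> carrier F \<Longrightarrow> u [^]\<^bsub>F\<^esub> k = red P (powZ n u k)"
proof (induction k)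
  case 0
  then show ?case using P1 by (simp add: FF_simps red_def)
next
  case (Suc k)
  then show ?case by (simp add: FF_simps red_mulZ_left)
qed

lemma frob: "u \<in> carrier F \<Longrightarrow> u [^]\<^bsub>F\<^esub> p = red P (fst u, - snd u)"
  using frob_Z[of "fst u" "snd u"] Fpow by simp

end

context qf
begin

definition emb :: "int \<Rightarrow> int \<times> int" where "emb x = (x mod P, 0)"

lemma emb_carrier [simp]: "emb x \<in> carrier F"
  using P1 by (simp add: emb_def FF_simps)

lemma emb_add: "emb (a + b) = emb a \<oplus>\<^bsub>F\<^esub> emb b"
  by (simp add: emb_def FF_simps red_def addZ_def mod_simps)

lemma emb_mult: "emb (a * b) = emb a \<otimes>\<^bsub>F\<^esub> emb b"
  by (simp add: emb_def FF_simps red_def mulZ_def mod_simps)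

lemma emb_one: "emb 1 = \<one>\<^bsub>F\<^esub>"
  using P1 by (simp add: emb_def FF_simps)

lemma emb_zero: "emb 0 = \<zero>\<^bsub>F\<^esub>"
  by (simp add: emb_def FF_simps)

lemma emb_neg: "emb (- a) = \<ominus>\<^bsub>F\<^esub> emb a"
proof -
  have "emb (- a) \<oplus>\<^bsub>F\<^esub> emb a = \<zero>\<^bsub>F\<^esub>"
    by (simp add: emb_add[symmetric] emb_zero)
  then show ?thesis by (intro K.minus_equality[symmetric]) auto
qed

lemma emb_diff: "emb (a - b) = emb a \<ominus>\<^bsub>F\<^esub> emb b"
  by (simp add: K.minus_eq emb_add[symmetric] emb_neg[symmetric])

lemma emb_pow: "emb a [^]\<^bsub>F\<^esub> k = emb (a ^ k)"
  by (induction k) (simp_all add: emb_one emb_mult[symmetric] mult.commute)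

lemma emb_eq: "emb a = emb b \<longleftrightarrow> a mod P = b mod P"
  by (simp add: emb_def)

lemma frob_add:
  assumes "u \<in> carrier F" "v \<in> carrier F"
  shows "(u \<oplus>\<^bsub>F\<^esub> v) [^]\<^bsub>F\<^esub> p = u [^]\<^bsub>F\<^esub> p \<oplus>\<^bsub>F\<^esub> v [^]\<^bsub>F\<^esub> p"
proof -
  have "u \<oplus>\<^bsub>F\<^esub> v \<in> carrier F" using assms by simp
  then have "(u \<oplus>\<^bsub>F\<^esub> v) [^]\<^bsub>F\<^esub> p = red P (fst (u \<oplus>\<^bsub>F\<^esub> v), - snd (u \<oplus>\<^bsub>F\<^esub> v))" by (rule frob)
  also have "\<dots> = red P (addZ (fst u, - snd u) (fst v, - snd v))"
    by (simp add: FF_simps red_def addZ_def mod_simps)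
  also have "\<dots> = red P (addZ (red P (fst u, - snd u)) (red P (fst v, - snd v)))"
    by (simp add: red_addZ_left red_addZ_right)
  also have "\<dots> = u [^]\<^bsub>F\<^esub> p \<oplus>\<^bsub>F\<^esub> v [^]\<^bsub>F\<^esub> p"
    using assms by (simp add: frob FF_simps)
  finally show ?thesis .
qed

lemma frob_emb: "emb a [^]\<^bsub>F\<^esub> p = emb a"
  using fermat_int2[OF prime, of a] by (simp add: emb_pow emb_eq cong_def)

lemma root2:
  assumes "Y \<in> carrier F" "z \<in> carrier F" "w \<in> carrier F" "z \<otimes>\<^bsub>F\<^esub> w = \<one>\<^bsub>F\<^esub>"
    and "Y \<otimes>\<^bsub>F\<^esub> Y \<oplus>\<^bsub>F\<^esub> \<one>\<^bsub>F\<^esub> = (z \<oplus>\<^bsub>F\<^esub> w) \<otimes>\<^bsub>F\<^esub> Y"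
  shows "Y = z \<or> Y = w"
proof -
  have "(Y \<ominus>\<^bsub>F\<^esub> z) \<otimes>\<^bsub>F\<^esub> (Y \<ominus>\<^bsub>F\<^esub> w) = (Y \<otimes>\<^bsub>F\<^esub> Y \<oplus>\<^bsub>F\<^esub> z \<otimes>\<^bsub>F\<^esub> w) \<ominus>\<^bsub>F\<^esub> (z \<oplus>\<^bsub>F\<^esub> w) \<otimes>\<^bsub>F\<^esub> Y"
    using assms(1-3) by algebra
  also have "\<dots> = \<zero>\<^bsub>F\<^esub>" using assms by simp
  finally have "(Y \<ominus>\<^bsub>F\<^esub> z) \<otimes>\<^bsub>F\<^esub> (Y \<ominus>\<^bsub>F\<^esub> w) = \<zero>\<^bsub>F\<^esub>" .
  then have "Y \<ominus>\<^bsub>F\<^esub> z = \<zero>\<^bsub>F\<^esub> \<or> Y \<ominus>\<^bsub>F\<^esub> w = \<zero>\<^bsub>F\<^esub>"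
    using assms(1-3) by (simp add: K.integral_iff)
  then show ?thesis using assms(1-3) by simp
qed

lemma card_F: "card (carrier F) = p * p"
  by (simp add: FF_simps card_cartesian_product)

lemma gen: "\<exists>g \<in> carrier F - {\<zero>\<^bsub>F\<^esub>}. group.ord (mult_of F) g = (p - 1) * (p + 1) \<and>
   (\<forall>u \<in> carrier F - {\<zero>\<^bsub>F\<^esub>}. \<exists>i::nat. u = g [^]\<^bsub>F\<^esub> i)"
proof -
  have fin: "finite (carrier F)" by (simp add: FF_simps)
  obtain g where g: "g \<in> carrier (mult_of F)" and gen: "carrier (mult_of F) = {g [^]\<^bsub>mult_of F\<^esub> i | i::nat. i \<in> UNIV}"
    using K.finite_field_mult_group_has_gen[OF fin] by (auto simp: nat_pow_mult_of)
  interpret M: group "mult_of F" by (rule K.field_mult_group)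
  have finM: "finite (carrier (mult_of F))" using fin by simp
  have ordM: "order (mult_of F) = (p - 1) * (p + 1)"
    using K.order_mult_of[OF fin] card_F unfolding order_def
    by (simp add: algebra_simps)
  have "carrier (mult_of F) = {g [^]\<^bsub>mult_of F\<^esub> x | x. x \<in> {0 .. M.ord g - 1}}"
    using gen M.ord_elems[OF finM g] by simp
  also have "\<dots> = (\<lambda>x. g [^]\<^bsub>mult_of F\<^esub> x) ` {0 .. M.ord g - 1}" by auto
  finally have "card (carrier (mult_of F)) \<le> card {0 .. M.ord g - 1}"
    by (metis card_image_le finite_atLeastAtMost)
  then have "order (mult_of F) \<le> M.ord g" using M.ord_ge_1[OF finM g] unfolding order_def by simp
  moreover have "M.ord g \<le> order (mult_of F)" using M.ord_le_group_order[OF finM g] .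
  moreover have "\<forall>u \<in> carrier F - {\<zero>\<^bsub>F\<^esub>}. \<exists>i::nat. u = g [^]\<^bsub>F\<^esub> i"
    using gen by (auto simp: nat_pow_mult_of)
  ultimately show ?thesis using g ordM by (intro bexI[of _ g]) auto
qed

end

context qf
begin

lemma sqrt_emb: "\<exists>t \<in> carrier F. t \<otimes>\<^bsub>F\<^esub> t = emb c"
proof (cases "emb c = \<zero>\<^bsub>F\<^esub>")
  case True
  then show ?thesis by (intro bexI[of _ "\<zero>\<^bsub>F\<^esub>"]) auto
next
  case False
  obtain g where g: "g \<in> carrier F - {\<zero>\<^bsub>F\<^esub>}" and og: "group.ord (mult_of F) g = (p - 1) * (p + 1)"
    and gall: "\<forall>u \<in> carrier F - {\<zero>\<^bsub>F\<^esub>}. \<exists>i::nat. u = g [^]\<^bsub>F\<^esub> i"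
    using gen by blast
  interpret M: group "mult_of F" by (rule K.field_mult_group)
  have gM: "g \<in> carrier (mult_of F)" using g by simp
  have "emb c \<in> carrier F - {\<zero>\<^bsub>F\<^esub>}" using False by simp
  then obtain i :: nat where i: "emb c = g [^]\<^bsub>F\<^esub> i" using gall by blast
  have "\<not> P dvd c" using False by (auto simp: emb_def FF_simps dvd_eq_mod_eq_0)
  then have "[c ^ (p - 1) = 1] (mod P)" using fermat_int prime by blast
  then have "emb c [^]\<^bsub>F\<^esub> (p - 1) = \<one>\<^bsub>F\<^esub>" by (simp add: emb_pow emb_one[symmetric] emb_eq cong_def)
  then have "g [^]\<^bsub>F\<^esub> (i * (p - 1)) = \<one>\<^bsub>F\<^esub>" using i g by (simp add: K.nat_pow_pow)
  then have "(p - 1) * (p + 1) dvd i * (p - 1)"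
    using M.pow_eq_id[OF gM] og by (simp add: nat_pow_mult_of)
  then have "(p - 1) * (p + 1) dvd (p - 1) * i" by (simp add: mult.commute)
  moreover have "p - 1 > 0" using p2 by simp
  ultimately have "p + 1 dvd i" using nat_mult_dvd_cancel1 by blast
  moreover have "even (p + 1)" using odd_p by simp
  ultimately have "even i" using dvd_trans by blast
  then obtain j where j: "i = j + j" by (metis mult_2 evenE)
  show ?thesis
    using g i j by (intro bexI[of _ "g [^]\<^bsub>F\<^esub> j"]) (auto simp: K.nat_pow_mult)
qed

lemma exists_z:
  "\<exists>z w. z \<in> carrier F \<and> w \<in> carrier F \<and> z \<otimes>\<^bsub>F\<^esub> w = \<one>\<^bsub>F\<^esub> \<and> z \<oplus>\<^bsub>F\<^esub> w = emb x \<and>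
     (z [^]\<^bsub>F\<^esub> (p - 1) = \<one>\<^bsub>F\<^esub> \<or> z [^]\<^bsub>F\<^esub> (p + 1) = \<one>\<^bsub>F\<^esub>)"
proof -
  obtain t where t: "t \<in> carrier F" "t \<otimes>\<^bsub>F\<^esub> t = emb (x ^ 2 - 4)" using sqrt_emb by blast
  define h where "h = emb ((P + 1) div 2)"
  have hc: "h \<in> carrier F" by (simp add: h_def)
  have h2: "emb 2 \<otimes>\<^bsub>F\<^esub> h = \<one>\<^bsub>F\<^esub>"
  proof -
    have "odd P" using odd_p by simp
    then obtain k where "P = 2 * k + 1" by (rule oddE)
    then have "2 * ((P + 1) div 2) = P + 1" by simp
    then have "emb 2 \<otimes>\<^bsub>F\<^esub> h = emb (P + 1)" by (simp add: h_def emb_mult[symmetric])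
    also have "\<dots> = \<one>\<^bsub>F\<^esub>" by (simp add: emb_one[symmetric] emb_eq)
    finally show ?thesis .
  qed
  define z where "z = (emb x \<oplus>\<^bsub>F\<^esub> t) \<otimes>\<^bsub>F\<^esub> h"
  define w where "w = (emb x \<ominus>\<^bsub>F\<^esub> t) \<otimes>\<^bsub>F\<^esub> h"
  have ex: "emb x \<in> carrier F" "emb 2 \<in> carrier F" by simp_all
  have zc: "z \<in> carrier F" and wc: "w \<in> carrier F" using t hc by (simp_all add: z_def w_def)
  have "z \<oplus>\<^bsub>F\<^esub> w = (emb x \<oplus>\<^bsub>F\<^esub> emb x) \<otimes>\<^bsub>F\<^esub> h"
    unfolding z_def w_def using t(1) hc ex by algebra
  also have "emb x \<oplus>\<^bsub>F\<^esub> emb x = emb x \<otimes>\<^bsub>F\<^esub> emb 2"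
    by (simp add: emb_add[symmetric] emb_mult[symmetric] mult_2_right)
  also have "(emb x \<otimes>\<^bsub>F\<^esub> emb 2) \<otimes>\<^bsub>F\<^esub> h = emb x"
    using h2 hc by (simp add: K.m_assoc)
  finally have sum: "z \<oplus>\<^bsub>F\<^esub> w = emb x" .
  have "z \<otimes>\<^bsub>F\<^esub> w = (emb x \<otimes>\<^bsub>F\<^esub> emb x \<ominus>\<^bsub>F\<^esub> t \<otimes>\<^bsub>F\<^esub> t) \<otimes>\<^bsub>F\<^esub> (h \<otimes>\<^bsub>F\<^esub> h)"
    unfolding z_def w_def using t(1) hc ex by algebra
  also have "emb x \<otimes>\<^bsub>F\<^esub> emb x \<ominus>\<^bsub>F\<^esub> t \<otimes>\<^bsub>F\<^esub> t = emb 2 \<otimes>\<^bsub>F\<^esub> emb 2"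
    using t by (simp add: emb_mult[symmetric] emb_diff[symmetric] power2_eq_square)
  also have "(emb 2 \<otimes>\<^bsub>F\<^esub> emb 2) \<otimes>\<^bsub>F\<^esub> (h \<otimes>\<^bsub>F\<^esub> h) = (emb 2 \<otimes>\<^bsub>F\<^esub> h) \<otimes>\<^bsub>F\<^esub> (emb 2 \<otimes>\<^bsub>F\<^esub> h)"
    using hc ex by algebra
  finally have prod: "z \<otimes>\<^bsub>F\<^esub> w = \<one>\<^bsub>F\<^esub>" using h2 by simp
  have "(z \<oplus>\<^bsub>F\<^esub> w) \<otimes>\<^bsub>F\<^esub> z = z \<otimes>\<^bsub>F\<^esub> z \<oplus>\<^bsub>F\<^esub> w \<otimes>\<^bsub>F\<^esub> z" using zc wc by (simp add: K.l_distr)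
  moreover have "w \<otimes>\<^bsub>F\<^esub> z = \<one>\<^bsub>F\<^esub>" using prod zc wc K.m_comm by metis
  ultimately have zz: "z \<otimes>\<^bsub>F\<^esub> z \<oplus>\<^bsub>F\<^esub> \<one>\<^bsub>F\<^esub> = (z \<oplus>\<^bsub>F\<^esub> w) \<otimes>\<^bsub>F\<^esub> z" by simp
  have "(z \<otimes>\<^bsub>F\<^esub> z \<oplus>\<^bsub>F\<^esub> \<one>\<^bsub>F\<^esub>) [^]\<^bsub>F\<^esub> p = ((z \<oplus>\<^bsub>F\<^esub> w) \<otimes>\<^bsub>F\<^esub> z) [^]\<^bsub>F\<^esub> p" using zz by simp
  then have "z [^]\<^bsub>F\<^esub> p \<otimes>\<^bsub>F\<^esub> z [^]\<^bsub>F\<^esub> p \<oplus>\<^bsub>F\<^esub> \<one>\<^bsub>F\<^esub> = (z \<oplus>\<^bsub>F\<^esub> w) \<otimes>\<^bsub>F\<^esub> z [^]\<^bsub>F\<^esub> p"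
    using zc wc by (simp add: frob_add K.nat_pow_distrib sum frob_emb)
  then have "z [^]\<^bsub>F\<^esub> p = z \<or> z [^]\<^bsub>F\<^esub> p = w"
    using zc wc prod by (intro root2) auto
  then have "z [^]\<^bsub>F\<^esub> (p - 1) = \<one>\<^bsub>F\<^esub> \<or> z [^]\<^bsub>F\<^esub> (p + 1) = \<one>\<^bsub>F\<^esub>"
  proof
    assume a: "z [^]\<^bsub>F\<^esub> p = z"
    have z0: "z \<noteq> \<zero>\<^bsub>F\<^esub>" using prod zc wc by auto
    have "z [^]\<^bsub>F\<^esub> (p - 1) \<otimes>\<^bsub>F\<^esub> z = \<one>\<^bsub>F\<^esub> \<otimes>\<^bsub>F\<^esub> z"
      using a zc p2 by (metis K.l_one K.nat_pow_Suc Suc_diff_1 gr0I not_less0 less_trans zero_less_numeral)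
    then have "z [^]\<^bsub>F\<^esub> (p - 1) = \<one>\<^bsub>F\<^esub>" using z0 zc K.m_rcancel[of z "z [^]\<^bsub>F\<^esub> (p - 1)" "\<one>\<^bsub>F\<^esub>"] by simp
    then show ?thesis by simp
  next
    assume a: "z [^]\<^bsub>F\<^esub> p = w"
    have "z [^]\<^bsub>F\<^esub> (p + 1) = w \<otimes>\<^bsub>F\<^esub> z" using a by simp
    then show ?thesis using prod zc wc by (simp add: K.m_comm)
  qed
  then show ?thesis using zc wc prod sum by blast
qed

lemma cheb_tr:
  assumes zc: "z \<in> carrier F" and wc: "w \<in> carrier F" and zw: "z \<otimes>\<^bsub>F\<^esub> w = \<one>\<^bsub>F\<^esub>" and s: "z \<oplus>\<^bsub>F\<^esub> w = emb x"
  shows "z [^]\<^bsub>F\<^esub> k \<oplus>\<^bsub>F\<^esub> w [^]\<^bsub>F\<^esub> k = emb (poly (cheb k) x)"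
proof (induction k rule: cheb.induct)
  case 1
  show ?case using zc wc by (simp add: emb_one[symmetric] emb_add[symmetric])
next
  case 2
  show ?case using zc wc s by simp
next
  case (3 k)
  define a where "a = z [^]\<^bsub>F\<^esub> k"
  define b where "b = w [^]\<^bsub>F\<^esub> k"
  have ab: "a \<in> carrier F" "b \<in> carrier F" using zc wc by (simp_all add: a_def b_def)
  have e1: "z [^]\<^bsub>F\<^esub> Suc (Suc k) \<oplus>\<^bsub>F\<^esub> w [^]\<^bsub>F\<^esub> Suc (Suc k) = a \<otimes>\<^bsub>F\<^esub> z \<otimes>\<^bsub>F\<^esub> z \<oplus>\<^bsub>F\<^esub> b \<otimes>\<^bsub>F\<^esub> w \<otimes>\<^bsub>F\<^esub> w"
    by (simp add: a_def b_def)
  have e2: "(z \<oplus>\<^bsub>F\<^esub> w) \<otimes>\<^bsub>F\<^esub> (a \<otimes>\<^bsub>F\<^esub> z \<oplus>\<^bsub>F\<^esub> b \<otimes>\<^bsub>F\<^esub> w) =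
      a \<otimes>\<^bsub>F\<^esub> z \<otimes>\<^bsub>F\<^esub> z \<oplus>\<^bsub>F\<^esub> b \<otimes>\<^bsub>F\<^esub> w \<otimes>\<^bsub>F\<^esub> w \<oplus>\<^bsub>F\<^esub> (a \<oplus>\<^bsub>F\<^esub> b) \<otimes>\<^bsub>F\<^esub> (z \<otimes>\<^bsub>F\<^esub> w)"
    using ab zc wc by algebra
  have cancel: "\<And>X Y. X \<in> carrier F \<Longrightarrow> Y \<in> carrier F \<Longrightarrow> X \<oplus>\<^bsub>F\<^esub> Y \<ominus>\<^bsub>F\<^esub> Y = X" by algebra
  have "(z \<oplus>\<^bsub>F\<^esub> w) \<otimes>\<^bsub>F\<^esub> (a \<otimes>\<^bsub>F\<^esub> z \<oplus>\<^bsub>F\<^esub> b \<otimes>\<^bsub>F\<^esub> w) \<ominus>\<^bsub>F\<^esub> (a \<oplus>\<^bsub>F\<^esub> b) =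
      a \<otimes>\<^bsub>F\<^esub> z \<otimes>\<^bsub>F\<^esub> z \<oplus>\<^bsub>F\<^esub> b \<otimes>\<^bsub>F\<^esub> w \<otimes>\<^bsub>F\<^esub> w \<oplus>\<^bsub>F\<^esub> (a \<oplus>\<^bsub>F\<^esub> b) \<ominus>\<^bsub>F\<^esub> (a \<oplus>\<^bsub>F\<^esub> b)" using e2 zw ab by simp
  also have "\<dots> = a \<otimes>\<^bsub>F\<^esub> z \<otimes>\<^bsub>F\<^esub> z \<oplus>\<^bsub>F\<^esub> b \<otimes>\<^bsub>F\<^esub> w \<otimes>\<^bsub>F\<^esub> w" using ab zc wc by (intro cancel) auto
  finally have e5: "(z \<oplus>\<^bsub>F\<^esub> w) \<otimes>\<^bsub>F\<^esub> (a \<otimes>\<^bsub>F\<^esub> z \<oplus>\<^bsub>F\<^esub> b \<otimes>\<^bsub>F\<^esub> w) \<ominus>\<^bsub>F\<^esub> (a \<oplus>\<^bsub>F\<^esub> b) = a \<otimes>\<^bsub>F\<^esub> z \<otimes>\<^bsub>F\<^esub> z \<oplus>\<^bsub>F\<^esub> b \<otimes>\<^bsub>F\<^esub> w \<otimes>\<^bsub>F\<^esub> w" .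
  have r: "z [^]\<^bsub>F\<^esub> Suc k = a \<otimes>\<^bsub>F\<^esub> z" "w [^]\<^bsub>F\<^esub> Suc k = b \<otimes>\<^bsub>F\<^esub> w" by (simp_all add: a_def b_def)
  have e6: "(z \<oplus>\<^bsub>F\<^esub> w) \<otimes>\<^bsub>F\<^esub> (z [^]\<^bsub>F\<^esub> Suc k \<oplus>\<^bsub>F\<^esub> w [^]\<^bsub>F\<^esub> Suc k) \<ominus>\<^bsub>F\<^esub> (z [^]\<^bsub>F\<^esub> k \<oplus>\<^bsub>F\<^esub> w [^]\<^bsub>F\<^esub> k) =
      (z \<oplus>\<^bsub>F\<^esub> w) \<otimes>\<^bsub>F\<^esub> (a \<otimes>\<^bsub>F\<^esub> z \<oplus>\<^bsub>F\<^esub> b \<otimes>\<^bsub>F\<^esub> w) \<ominus>\<^bsub>F\<^esub> (a \<oplus>\<^bsub>F\<^esub> b)"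
    by (simp only: r a_def[symmetric] b_def[symmetric])
  have e3: "z [^]\<^bsub>F\<^esub> Suc (Suc k) \<oplus>\<^bsub>F\<^esub> w [^]\<^bsub>F\<^esub> Suc (Suc k) = (z \<oplus>\<^bsub>F\<^esub> w) \<otimes>\<^bsub>F\<^esub> (z [^]\<^bsub>F\<^esub> Suc k \<oplus>\<^bsub>F\<^esub> w [^]\<^bsub>F\<^esub> Suc k) \<ominus>\<^bsub>F\<^esub> (z [^]\<^bsub>F\<^esub> k \<oplus>\<^bsub>F\<^esub> w [^]\<^bsub>F\<^esub> k)"
    using e1 e5 e6 by simp
  also have "\<dots> = emb (x * poly (cheb (Suc k)) x - poly (cheb k) x)"
    using 3 s by (simp add: emb_mult emb_diff)
  also have "x * poly (cheb (Suc k)) x - poly (cheb k) x = poly (cheb (Suc (Suc k))) x"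
    by simp
  finally show ?case .
qed

end

definition perc :: "nat \<Rightarrow> nat \<Rightarrow> nat \<Rightarrow> bool" where
  "perc r d m \<longleftrightarrow> (\<exists>k>0. r dvd d ^ (k + m) - d ^ m \<or> r dvd d ^ (k + m) + d ^ m)"

context qf
begin

lemma compose:
  "poly (cheb d) (poly (cheb j) x mod P) mod P = poly (cheb (j * d)) x mod P"
proof -
  obtain z w where zc: "z \<in> carrier F" and wc: "w \<in> carrier F" and zw: "z \<otimes>\<^bsub>F\<^esub> w = \<one>\<^bsub>F\<^esub>" and s: "z \<oplus>\<^bsub>F\<^esub> w = emb x"
    using exists_z[of x] by blast
  define u where "u = z [^]\<^bsub>F\<^esub> j"
  define v where "v = w [^]\<^bsub>F\<^esub> j"
  have uc: "u \<in> carrier F" "v \<in> carrier F" using zc wc by (simp_all add: u_def v_def)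
  have uv: "u \<otimes>\<^bsub>F\<^esub> v = \<one>\<^bsub>F\<^esub>" using zc wc zw by (simp add: u_def v_def K.nat_pow_distrib[symmetric])
  have "u \<oplus>\<^bsub>F\<^esub> v = emb (poly (cheb j) x)" using cheb_tr[OF zc wc zw s] by (simp add: u_def v_def)
  also have "\<dots> = emb (poly (cheb j) x mod P)" by (simp add: emb_eq)
  finally have "u [^]\<^bsub>F\<^esub> d \<oplus>\<^bsub>F\<^esub> v [^]\<^bsub>F\<^esub> d = emb (poly (cheb d) (poly (cheb j) x mod P))"
    by (rule cheb_tr[OF uc uv])
  moreover have "u [^]\<^bsub>F\<^esub> d \<oplus>\<^bsub>F\<^esub> v [^]\<^bsub>F\<^esub> d = emb (poly (cheb (j * d)) x)"
    using cheb_tr[OF zc wc zw s, of "j * d"] zc wc by (simp add: u_def v_def K.nat_pow_pow)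
  ultimately show ?thesis by (simp add: emb_eq)
qed

lemma iter:
  assumes "x \<in> {0..<P}"
  shows "(cheb_map p d ^^ m) x = poly (cheb (d ^ m)) x mod P"
proof (induction m)
  case 0
  then show ?case using assms by simp
next
  case (Suc m)
  then show ?case by (simp add: cheb_map_def compose mult.commute)
qed

lemma z_nonzero: "z \<in> carrier F \<Longrightarrow> w \<in> carrier F \<Longrightarrow> z \<otimes>\<^bsub>F\<^esub> w = \<one>\<^bsub>F\<^esub> \<Longrightarrow> z \<in> carrier (mult_of F)"
  by (cases "z = \<zero>\<^bsub>F\<^esub>") auto

lemma tr_char:
  assumes zc: "z \<in> carrier F" and wc: "w \<in> carrier F" and zw: "z \<otimes>\<^bsub>F\<^esub> w = \<one>\<^bsub>F\<^esub>" and BA: "B \<le> A"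
  shows "z [^]\<^bsub>F\<^esub> A \<oplus>\<^bsub>F\<^esub> w [^]\<^bsub>F\<^esub> A = z [^]\<^bsub>F\<^esub> B \<oplus>\<^bsub>F\<^esub> w [^]\<^bsub>F\<^esub> B \<longleftrightarrow>
    (group.ord (mult_of F) z dvd A - B \<or> group.ord (mult_of F) z dvd A + B)"
proof -
  interpret M: group "mult_of F" by (rule K.field_mult_group)
  have zM: "z \<in> carrier (mult_of F)" using z_nonzero zc wc zw by blast
  have pe: "z [^]\<^bsub>F\<^esub> k = \<one>\<^bsub>F\<^esub> \<longleftrightarrow> M.ord z dvd k" for k :: nat
    using M.pow_eq_id[OF zM, of k] by (simp add: nat_pow_mult_of)
  have wz: "w \<otimes>\<^bsub>F\<^esub> z = \<one>\<^bsub>F\<^esub>" using zw zc wc K.m_comm by metis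
  have wzk: "w [^]\<^bsub>F\<^esub> k \<otimes>\<^bsub>F\<^esub> z [^]\<^bsub>F\<^esub> k = \<one>\<^bsub>F\<^esub>" for k :: nat
    using K.nat_pow_distrib[OF wc zc, of k] wz by simp
  have zwk: "z [^]\<^bsub>F\<^esub> k \<otimes>\<^bsub>F\<^esub> w [^]\<^bsub>F\<^esub> k = \<one>\<^bsub>F\<^esub>" for k :: nat
    using K.nat_pow_distrib[OF zc wc, of k] zw by simp
  have zB0: "z [^]\<^bsub>F\<^esub> B \<noteq> \<zero>\<^bsub>F\<^esub>" using zwk[of B] zc wc by auto
  have AB: "A = (A - B) + B" using BA by simp
  have AB2: "z [^]\<^bsub>F\<^esub> A = z [^]\<^bsub>F\<^esub> (A - B) \<otimes>\<^bsub>F\<^esub> z [^]\<^bsub>F\<^esub> B" using zc AB by (metis K.nat_pow_mult)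
  show ?thesis
  proof
    assume eq: "z [^]\<^bsub>F\<^esub> A \<oplus>\<^bsub>F\<^esub> w [^]\<^bsub>F\<^esub> A = z [^]\<^bsub>F\<^esub> B \<oplus>\<^bsub>F\<^esub> w [^]\<^bsub>F\<^esub> B"
    have "(z [^]\<^bsub>F\<^esub> B \<oplus>\<^bsub>F\<^esub> w [^]\<^bsub>F\<^esub> B) \<otimes>\<^bsub>F\<^esub> z [^]\<^bsub>F\<^esub> A = (z [^]\<^bsub>F\<^esub> A \<oplus>\<^bsub>F\<^esub> w [^]\<^bsub>F\<^esub> A) \<otimes>\<^bsub>F\<^esub> z [^]\<^bsub>F\<^esub> A" using eq by simp
    also have "\<dots> = z [^]\<^bsub>F\<^esub> A \<otimes>\<^bsub>F\<^esub> z [^]\<^bsub>F\<^esub> A \<oplus>\<^bsub>F\<^esub> w [^]\<^bsub>F\<^esub> A \<otimes>\<^bsub>F\<^esub> z [^]\<^bsub>F\<^esub> A" using zc wc by (simp add: K.l_distr)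
    also have "\<dots> = z [^]\<^bsub>F\<^esub> A \<otimes>\<^bsub>F\<^esub> z [^]\<^bsub>F\<^esub> A \<oplus>\<^bsub>F\<^esub> \<one>\<^bsub>F\<^esub>" using wzk by simp
    finally have "z [^]\<^bsub>F\<^esub> A = z [^]\<^bsub>F\<^esub> B \<or> z [^]\<^bsub>F\<^esub> A = w [^]\<^bsub>F\<^esub> B"
      using zc wc zwk[of B] by (intro root2) auto
    then show "M.ord z dvd A - B \<or> M.ord z dvd A + B"
    proof
      assume a: "z [^]\<^bsub>F\<^esub> A = z [^]\<^bsub>F\<^esub> B"
      then have "z [^]\<^bsub>F\<^esub> (A - B) \<otimes>\<^bsub>F\<^esub> z [^]\<^bsub>F\<^esub> B = \<one>\<^bsub>F\<^esub> \<otimes>\<^bsub>F\<^esub> z [^]\<^bsub>F\<^esub> B" using AB2 zc by simp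
      then have "z [^]\<^bsub>F\<^esub> (A - B) = \<one>\<^bsub>F\<^esub>" using zB0 zc K.m_rcancel[of "z [^]\<^bsub>F\<^esub> B" "z [^]\<^bsub>F\<^esub> (A - B)" "\<one>\<^bsub>F\<^esub>"] by simp
      then show ?thesis using pe by blast
    next
      assume a: "z [^]\<^bsub>F\<^esub> A = w [^]\<^bsub>F\<^esub> B"
      then have "z [^]\<^bsub>F\<^esub> (A + B) = \<one>\<^bsub>F\<^esub>" using wzk[of B] zc K.nat_pow_mult[of z A B, symmetric] by simp
      then show ?thesis using pe by blast
    qed
  next
    assume "M.ord z dvd A - B \<or> M.ord z dvd A + B"
    then show "z [^]\<^bsub>F\<^esub> A \<oplus>\<^bsub>F\<^esub> w [^]\<^bsub>F\<^esub> A = z [^]\<^bsub>F\<^esub> B \<oplus>\<^bsub>F\<^esub> w [^]\<^bsub>F\<^esub> B"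
    proof
      assume "M.ord z dvd A - B"
      then have o: "z [^]\<^bsub>F\<^esub> (A - B) = \<one>\<^bsub>F\<^esub>" using pe by blast
      then have za: "z [^]\<^bsub>F\<^esub> A = z [^]\<^bsub>F\<^esub> B" using AB2 zc by simp
      have "w [^]\<^bsub>F\<^esub> A = w [^]\<^bsub>F\<^esub> A \<otimes>\<^bsub>F\<^esub> (z [^]\<^bsub>F\<^esub> B \<otimes>\<^bsub>F\<^esub> w [^]\<^bsub>F\<^esub> B)" using zwk[of B] wc by simp
      also have "\<dots> = (w [^]\<^bsub>F\<^esub> A \<otimes>\<^bsub>F\<^esub> z [^]\<^bsub>F\<^esub> A) \<otimes>\<^bsub>F\<^esub> w [^]\<^bsub>F\<^esub> B" using za zc wc by (simp add: K.m_assoc)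
      also have "\<dots> = w [^]\<^bsub>F\<^esub> B" using wzk[of A] wc by simp
      finally show ?thesis using za by simp
    next
      assume "M.ord z dvd A + B"
      then have o: "z [^]\<^bsub>F\<^esub> A \<otimes>\<^bsub>F\<^esub> z [^]\<^bsub>F\<^esub> B = \<one>\<^bsub>F\<^esub>" using pe zc by (simp add: K.nat_pow_mult)
      have "z [^]\<^bsub>F\<^esub> A = z [^]\<^bsub>F\<^esub> A \<otimes>\<^bsub>F\<^esub> (z [^]\<^bsub>F\<^esub> B \<otimes>\<^bsub>F\<^esub> w [^]\<^bsub>F\<^esub> B)" using zwk[of B] zc by simp
      also have "\<dots> = (z [^]\<^bsub>F\<^esub> A \<otimes>\<^bsub>F\<^esub> z [^]\<^bsub>F\<^esub> B) \<otimes>\<^bsub>F\<^esub> w [^]\<^bsub>F\<^esub> B" using zc wc by (simp add: K.m_assoc)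
      also have "\<dots> = w [^]\<^bsub>F\<^esub> B" using o wc by simp
      finally have za: "z [^]\<^bsub>F\<^esub> A = w [^]\<^bsub>F\<^esub> B" .
      have "w [^]\<^bsub>F\<^esub> A = w [^]\<^bsub>F\<^esub> A \<otimes>\<^bsub>F\<^esub> (z [^]\<^bsub>F\<^esub> A \<otimes>\<^bsub>F\<^esub> z [^]\<^bsub>F\<^esub> B)" using o wc by simp
      also have "\<dots> = (w [^]\<^bsub>F\<^esub> A \<otimes>\<^bsub>F\<^esub> z [^]\<^bsub>F\<^esub> A) \<otimes>\<^bsub>F\<^esub> z [^]\<^bsub>F\<^esub> B" using zc wc by (simp add: K.m_assoc)
      also have "\<dots> = z [^]\<^bsub>F\<^esub> B" using wzk[of A] zc by simp
      finally show ?thesis using za zc wc by (simp add: K.a_comm)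
    qed
  qed
qed

lemma per_char:
  assumes zc: "z \<in> carrier F" and wc: "w \<in> carrier F" and zw: "z \<otimes>\<^bsub>F\<^esub> w = \<one>\<^bsub>F\<^esub>"
    and s: "z \<oplus>\<^bsub>F\<^esub> w = emb x" and x: "x \<in> {0..<P}" and d0: "d > 0"
  shows "periodic_pt (cheb_map p d) ((cheb_map p d ^^ m) x) \<longleftrightarrow> perc (group.ord (mult_of F) z) d m"
proof -
  have "periodic_pt (cheb_map p d) ((cheb_map p d ^^ m) x) \<longleftrightarrow>
      (\<exists>k>0. (cheb_map p d ^^ (k + m)) x = (cheb_map p d ^^ m) x)"
    by (simp add: periodic_pt_def funpow_add)
  also have "\<dots> \<longleftrightarrow> (\<exists>k>0. emb (poly (cheb (d ^ (k + m))) x) = emb (poly (cheb (d ^ m)) x))"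
    using x by (simp add: iter emb_eq)
  also have "\<dots> \<longleftrightarrow> (\<exists>k>0. z [^]\<^bsub>F\<^esub> (d ^ (k + m)) \<oplus>\<^bsub>F\<^esub> w [^]\<^bsub>F\<^esub> (d ^ (k + m)) = z [^]\<^bsub>F\<^esub> (d ^ m) \<oplus>\<^bsub>F\<^esub> w [^]\<^bsub>F\<^esub> (d ^ m))"
    by (simp add: cheb_tr[OF zc wc zw s])
  also have "\<dots> \<longleftrightarrow> perc (group.ord (mult_of F) z) d m"
  proof -
    have "d ^ m \<le> d ^ (k + m)" if "k > 0" for k
      using d0 by (simp add: power_increasing)
    then show ?thesis unfolding perc_def using tr_char[OF zc wc zw] by auto
  qed
  finally show ?thesis .
qed

end

definition Cd :: "nat \<Rightarrow> nat \<Rightarrow> nat" where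
  "Cd d r = Max ((\<lambda>q. nat \<lceil>real (multiplicity q r) / real (multiplicity q d)\<rceil>) ` prime_factors d)"

lemma ceil_le:
  assumes "b > 0"
  shows "nat \<lceil>real a / real b\<rceil> \<le> m \<longleftrightarrow> a \<le> m * b"
proof -
  have "nat \<lceil>real a / real b\<rceil> \<le> m \<longleftrightarrow> \<lceil>real a / real b\<rceil> \<le> int m" by linarith
  also have "\<dots> \<longleftrightarrow> real a / real b \<le> real m" by (simp add: ceiling_le_iff)
  also have "\<dots> \<longleftrightarrow> real a \<le> real m * real b" using assms by (simp add: pos_divide_le_eq)
  also have "\<dots> \<longleftrightarrow> a \<le> m * b" by (simp only: of_nat_mult[symmetric] of_nat_le_iff)
  finally show ?thesis .
qed

lemma pf_nonempty: "d > (1::nat) \<Longrightarrow> prime_factors d \<noteq> {}"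
proof -
  assume "d > 1"
  then obtain q where "prime q" "q dvd d" using prime_divisorE[of d] by auto
  then have "q \<in> prime_factors d" using \<open>d > 1\<close> by (simp add: in_prime_factors_iff)
  then show ?thesis by blast
qed

lemma mult_pos: "q \<in> prime_factors d \<Longrightarrow> multiplicity q d > 0"
  by (auto simp: in_prime_factors_iff multiplicity_gt_zero_iff)

lemma Cd_le:
  assumes "d > 1"
  shows "Cd d r \<le> m \<longleftrightarrow> (\<forall>q \<in> prime_factors d. multiplicity q r \<le> m * multiplicity q d)"
proof -
  have "Cd d r \<le> m \<longleftrightarrow> (\<forall>q \<in> prime_factors d. nat \<lceil>real (multiplicity q r) / real (multiplicity q d)\<rceil> \<le> m)"
    unfolding Cd_def using pf_nonempty[OF assms] by (subst Max_le_iff) auto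
  also have "\<dots> \<longleftrightarrow> (\<forall>q \<in> prime_factors d. multiplicity q r \<le> m * multiplicity q d)"
    by (intro ball_cong refl ceil_le mult_pos)
  finally show ?thesis .
qed

lemma perc_iff:
  assumes d: "d > 1" and r: "r > 0"
  shows "perc r d m \<longleftrightarrow> (\<forall>q \<in> prime_factors d. multiplicity q r \<le> m * multiplicity q d)"
proof
  assume "perc r d m"
  then obtain k where k: "k > 0" and h: "r dvd d ^ (k + m) - d ^ m \<or> r dvd d ^ (k + m) + d ^ m"
    unfolding perc_def by blast
  have dk: "d ^ k \<ge> 2" using d k
  proof -
    have "d ^ 1 \<le> d ^ k" using d k by (intro power_increasing) auto
    then show ?thesis using d by simp
  qed
  obtain E where E: "r dvd d ^ m * E" and EE: "E = d ^ k - 1 \<or> E = d ^ k + 1"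
  proof (cases "r dvd d ^ (k + m) - d ^ m")
    case True
    have "d ^ (k + m) - d ^ m = d ^ m * (d ^ k - 1)" by (simp add: power_add diff_mult_distrib2 mult.commute)
    then show ?thesis using True that by auto
  next
    case False
    then have "r dvd d ^ (k + m) + d ^ m" using h by blast
    moreover have "d ^ (k + m) + d ^ m = d ^ m * (d ^ k + 1)" by (simp add: power_add algebra_simps)
    ultimately have "r dvd d ^ m * (d ^ k + 1)" by simp
    then show ?thesis using that by blast
  qed
  have E0: "E \<noteq> 0" using EE dk by auto
  show "\<forall>q \<in> prime_factors d. multiplicity q r \<le> m * multiplicity q d"
  proof
    fix q assume q: "q \<in> prime_factors d"
    then have pq: "prime q" and qd: "q dvd d" and d0: "d \<noteq> 0" by (auto simp: in_prime_factors_iff)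
    have "q dvd d ^ k" using qd k by (meson dvd_power dvd_trans)
    have "\<not> q dvd E"
    proof
      assume "q dvd E"
      then have "q dvd 1"
      proof (cases "E = d ^ k - 1")
        case True
        then have "q dvd d ^ k - (d ^ k - 1)" using \<open>q dvd E\<close> \<open>q dvd d ^ k\<close> by (simp add: dvd_diff_nat)
        then show ?thesis using dk by simp
      next
        case False
        then have "E = d ^ k + 1" using EE by blast
        then have "q dvd d ^ k + 1" using \<open>q dvd E\<close> by simp
        then show ?thesis using dvd_add_right_iff[OF \<open>q dvd d ^ k\<close>, of 1] by simp
      qed
      then show False using pq by simp
    qed
    then have mE: "multiplicity q E = 0" by (rule not_dvd_imp_multiplicity_0)
    have "multiplicity q r \<le> multiplicity q (d ^ m * E)"
      using E E0 d0 by (intro dvd_imp_multiplicity_le) auto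
    also have "\<dots> = m * multiplicity q d"
      using pq E0 d0 mE by (simp add: prime_elem_multiplicity_mult_distrib prime_elem_multiplicity_power_distrib)
    finally show "multiplicity q r \<le> m * multiplicity q d" .
  qed
next
  assume H: "\<forall>q \<in> prime_factors d. multiplicity q r \<le> m * multiplicity q d"
  define g where "g = gcd r (d ^ m)"
  define r' where "r' = r div g"
  have rg: "r = g * r'" by (simp add: g_def r'_def)
  have r'0: "r' > 0" using r rg by (cases "r' = 0") auto
  have cop: "coprime d r'"
  proof (rule ccontr)
    assume nc: "\<not> coprime d r'"
    have "gcd d r' \<noteq> 1" using nc coprime_iff_gcd_eq_1 by blast
    then obtain q where pq: "prime q" and qg: "q dvd gcd d r'" using prime_factor_nat by blast
    then have qd: "q dvd d" and qr': "q dvd r'" by auto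
    then have qpf: "q \<in> prime_factors d" using pq d by (auto simp: in_prime_factors_iff)
    define v where "v = multiplicity q r"
    have "q ^ v dvd r" by (simp add: v_def multiplicity_dvd)
    moreover have "v \<le> multiplicity q (d ^ m)"
      using H qpf pq d by (simp add: v_def prime_elem_multiplicity_power_distrib)
    then have "q ^ v dvd d ^ m" by (rule multiplicity_dvd')
    ultimately have "q ^ v dvd g" by (simp add: g_def)
    then have "q ^ v * q dvd g * r'" using qr' by (rule mult_dvd_mono)
    then have "q ^ Suc v dvd r" using rg by (simp add: mult.commute)
    moreover have "r \<noteq> 0" using r by simp
    moreover have "\<not> is_unit q" using pq not_prime_unit by blast
    ultimately have "Suc v \<le> multiplicity q r"
      using multiplicity_geI by blast
    then show False by (simp add: v_def)
  qed
  define k where "k = totient r'"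
  have k0: "k > 0" using r'0 by (simp add: k_def)
  have "[d ^ k = 1] (mod r')" using cop euler_theorem by (simp add: k_def)
  then have "r' dvd d ^ k - 1" by (rule cong_to_1_nat)
  moreover have "g dvd d ^ m" by (simp add: g_def)
  ultimately have "g * r' dvd d ^ m * (d ^ k - 1)" by (intro mult_dvd_mono)
  moreover have "d ^ m * (d ^ k - 1) = d ^ (k + m) - d ^ m" by (simp add: power_add diff_mult_distrib2 mult.commute)
  ultimately have "r dvd d ^ (k + m) - d ^ m" using rg by simp
  then show "perc r d m" using k0 unfolding perc_def by blast
qed

lemma tail_NT:
  assumes "d > 1" "r > 0" "\<And>m. Q m \<longleftrightarrow> perc r d m"
  shows "(LEAST m. Q m) = Cd d r"
proof -
  have "Q m \<longleftrightarrow> Cd d r \<le> m" for m using assms by (simp add: perc_iff Cd_le)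
  then show ?thesis by (intro Least_equality) auto
qed

lemma Cd_mono:
  assumes "d > 1" "r dvd N" "N \<noteq> 0"
  shows "Cd d r \<le> Cd d N"
proof -
  have "\<forall>q \<in> prime_factors d. multiplicity q N \<le> Cd d N * multiplicity q d"
    using Cd_le[OF assms(1), of N "Cd d N"] by simp
  moreover have "multiplicity q r \<le> multiplicity q N" for q
    using assms by (intro dvd_imp_multiplicity_le) auto
  ultimately show ?thesis using Cd_le[OF assms(1)] le_trans by blast
qed

context qf
begin

lemma trace_real:
  assumes zc: "z \<in> carrier F" and wc: "w \<in> carrier F" and zw: "z \<otimes>\<^bsub>F\<^esub> w = \<one>\<^bsub>F\<^esub>"
    and zp: "z [^]\<^bsub>F\<^esub> p = z \<or> z [^]\<^bsub>F\<^esub> p = w"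
  shows "\<exists>x \<in> {0..<P}. z \<oplus>\<^bsub>F\<^esub> w = emb x"
proof -
  have wz: "w \<otimes>\<^bsub>F\<^esub> z = \<one>\<^bsub>F\<^esub>" using zw zc wc K.m_comm by metis
  have wzp: "w [^]\<^bsub>F\<^esub> p \<otimes>\<^bsub>F\<^esub> z [^]\<^bsub>F\<^esub> p = \<one>\<^bsub>F\<^esub>" using K.nat_pow_distrib[OF wc zc, of p] wz by simp
  have tp: "(z \<oplus>\<^bsub>F\<^esub> w) [^]\<^bsub>F\<^esub> p = z \<oplus>\<^bsub>F\<^esub> w"
  proof (cases "z [^]\<^bsub>F\<^esub> p = z")
    case True
    have "w [^]\<^bsub>F\<^esub> p = w [^]\<^bsub>F\<^esub> p \<otimes>\<^bsub>F\<^esub> (z \<otimes>\<^bsub>F\<^esub> w)" using zw wc by simp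
    also have "\<dots> = (w [^]\<^bsub>F\<^esub> p \<otimes>\<^bsub>F\<^esub> z) \<otimes>\<^bsub>F\<^esub> w" using zc wc by (simp add: K.m_assoc)
    also have "\<dots> = w" using wzp True wc by simp
    finally show ?thesis using True zc wc by (simp add: frob_add)
  next
    case False
    then have zpw: "z [^]\<^bsub>F\<^esub> p = w" using zp by blast
    have "w [^]\<^bsub>F\<^esub> p = w [^]\<^bsub>F\<^esub> p \<otimes>\<^bsub>F\<^esub> (w \<otimes>\<^bsub>F\<^esub> z)" using wz wc by simp
    also have "\<dots> = (w [^]\<^bsub>F\<^esub> p \<otimes>\<^bsub>F\<^esub> w) \<otimes>\<^bsub>F\<^esub> z" using zc wc by (simp add: K.m_assoc)
    also have "\<dots> = z" using wzp zpw zc by simp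
    finally show ?thesis using zpw zc wc by (simp add: frob_add K.a_comm)
  qed
  define t where "t = z \<oplus>\<^bsub>F\<^esub> w"
  have tc: "t \<in> carrier F" using zc wc by (simp add: t_def)
  obtain a b where ab: "t = (a, b)" by force
  have ar: "a \<in> {0..<P}" "b \<in> {0..<P}" using tc ab by (auto simp: FF_simps)
  have "t = red P (a, - b)" using frob[OF tc] tp ab by (simp add: t_def)
  then have bb: "(- b) mod P = b" using ab by (simp add: red_def)
  have "b = 0"
  proof (rule ccontr)
    assume "b \<noteq> 0"
    then have "b mod P \<noteq> 0" "b mod P = b" using ar by auto
    then have "(- b) mod P = P - b" by (simp add: zmod_zminus1_eq_if)
    then have "P = 2 * b" using bb by simp
    then have "even P" by simp
    then show False using odd_p by simp
  qed
  then show ?thesis using ab ar by (intro bexI[of _ a]) (auto simp: t_def emb_def)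
qed

lemma gen_x:
  assumes x: "x \<in> {0..<P}" and d0: "d > 0"
  shows "\<exists>r. r > 0 \<and> (r dvd p - 1 \<or> r dvd p + 1) \<and>
    (\<forall>m. periodic_pt (cheb_map p d) ((cheb_map p d ^^ m) x) \<longleftrightarrow> perc r d m)"
proof -
  obtain z w where zc: "z \<in> carrier F" and wc: "w \<in> carrier F" and zw: "z \<otimes>\<^bsub>F\<^esub> w = \<one>\<^bsub>F\<^esub>"
    and s: "z \<oplus>\<^bsub>F\<^esub> w = emb x" and o: "z [^]\<^bsub>F\<^esub> (p - 1) = \<one>\<^bsub>F\<^esub> \<or> z [^]\<^bsub>F\<^esub> (p + 1) = \<one>\<^bsub>F\<^esub>"
    using exists_z[of x] by blast
  interpret M: group "mult_of F" by (rule K.field_mult_group)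
  have zM: "z \<in> carrier (mult_of F)" using z_nonzero zc wc zw by blast
  have fin: "finite (carrier (mult_of F))" by (simp add: FF_simps)
  have pe: "z [^]\<^bsub>F\<^esub> k = \<one>\<^bsub>F\<^esub> \<longleftrightarrow> M.ord z dvd k" for k :: nat
    using M.pow_eq_id[OF zM, of k] by (simp add: nat_pow_mult_of)
  have od: "M.ord z dvd p - 1 \<or> M.ord z dvd p + 1" using o pe by blast
  have og: "M.ord z > 0" using M.ord_ge_1[OF fin zM] by simp
  show ?thesis using og od per_char[OF zc wc zw s x d0] by blast
qed

lemma special:
  assumes N: "N = p - 1 \<or> N = p + 1" and d0: "d > 0"
  shows "\<exists>x \<in> {0..<P}. \<forall>m. periodic_pt (cheb_map p d) ((cheb_map p d ^^ m) x) \<longleftrightarrow> perc N d m"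
proof -
  interpret M: group "mult_of F" by (rule K.field_mult_group)
  obtain g where g: "g \<in> carrier F - {\<zero>\<^bsub>F\<^esub>}" and og: "M.ord g = (p - 1) * (p + 1)" using gen by blast
  have gM: "g \<in> carrier (mult_of F)" using g by simp
  define e where "e = (if N = p - 1 then p + 1 else p - 1)"
  have Ne: "(p - 1) * (p + 1) = e * N"
  proof (cases "N = p - 1")
    case True
    then show ?thesis by (simp add: e_def mult.commute)
  next
    case False
    then have "N = p + 1" using N by blast
    then show ?thesis using False by (simp add: e_def)
  qed
  have e0: "e \<noteq> 0" using p2 by (auto simp: e_def)
  define z where "z = g [^]\<^bsub>F\<^esub> e"
  have zM: "z \<in> carrier (mult_of F)" using M.nat_pow_closed[OF gM, of e] by (simp add: z_def nat_pow_mult_of)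
  have "M.ord (g [^]\<^bsub>mult_of F\<^esub> e) = M.ord g div e"
    using og Ne e0 by (intro M.ord_pow[OF gM]) auto
  then have oz: "M.ord z = N" using og Ne e0 by (simp add: z_def nat_pow_mult_of)
  have zc: "z \<in> carrier F" and z0: "z \<noteq> \<zero>\<^bsub>F\<^esub>" using zM by auto
  have zU: "z \<in> Units F" using zc z0 K.field_Units by blast
  define w where "w = inv\<^bsub>F\<^esub> z"
  have wc: "w \<in> carrier F" using zU by (simp add: w_def)
  have zw: "z \<otimes>\<^bsub>F\<^esub> w = \<one>\<^bsub>F\<^esub>" using zU by (simp add: w_def)
  have zN: "z [^]\<^bsub>F\<^esub> N = \<one>\<^bsub>F\<^esub>" using M.pow_ord_eq_1[OF zM] oz by (simp add: nat_pow_mult_of)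
  have zp: "z [^]\<^bsub>F\<^esub> p = z \<or> z [^]\<^bsub>F\<^esub> p = w"
  proof (cases "N = p - 1")
    case True
    have "Suc (p - 1) = p" using p2 by simp
    then have "z [^]\<^bsub>F\<^esub> p = z [^]\<^bsub>F\<^esub> Suc (p - 1)" by simp
    also have "\<dots> = z" using zN True zc by simp
    finally show ?thesis by blast
  next
    case False
    then have "N = p + 1" using N by blast
    have "z [^]\<^bsub>F\<^esub> p = z [^]\<^bsub>F\<^esub> p \<otimes>\<^bsub>F\<^esub> (z \<otimes>\<^bsub>F\<^esub> w)" using zw zc by simp
    also have "\<dots> = (z [^]\<^bsub>F\<^esub> p \<otimes>\<^bsub>F\<^esub> z) \<otimes>\<^bsub>F\<^esub> w" using zc wc by (simp add: K.m_assoc)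
    also have "\<dots> = w" using zN \<open>N = p + 1\<close> wc by simp
    finally show ?thesis by blast
  qed
  obtain x where x: "x \<in> {0..<P}" and s: "z \<oplus>\<^bsub>F\<^esub> w = emb x" using trace_real[OF zc wc zw zp] by blast
  show ?thesis using per_char[OF zc wc zw s x d0] x unfolding oz by blast
qed

lemma main_odd:
  assumes d: "d > 1"
  shows "Max ((\<lambda>x. tail (cheb_map p d) x) ` {0..<P}) = max (Cd d (p - 1)) (Cd d (p + 1))"
proof -
  have d0: "d > 0" using d by simp
  have tx: "\<exists>r. r > 0 \<and> (r dvd p - 1 \<or> r dvd p + 1) \<and> tail (cheb_map p d) x = Cd d r"
    if x: "x \<in> {0..<P}" for x
  proof -
    obtain r where r: "r > 0" "r dvd p - 1 \<or> r dvd p + 1"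
      and h: "\<And>m. periodic_pt (cheb_map p d) ((cheb_map p d ^^ m) x) \<longleftrightarrow> perc r d m"
      using gen_x[OF x d0] by blast
    have "tail (cheb_map p d) x = Cd d r"
      unfolding tail_def using d r(1) h by (rule tail_NT)
    then show ?thesis using r by blast
  qed
  have sp: "\<exists>x \<in> {0..<P}. tail (cheb_map p d) x = Cd d N" if N: "N = p - 1 \<or> N = p + 1" for N
  proof -
    obtain x where x: "x \<in> {0..<P}"
      and h: "\<And>m. periodic_pt (cheb_map p d) ((cheb_map p d ^^ m) x) \<longleftrightarrow> perc N d m"
      using special[OF N d0] by blast
    have "N > 0" using N p2 by auto
    then have "tail (cheb_map p d) x = Cd d N"
      unfolding tail_def using d h by (intro tail_NT) auto
    then show ?thesis using x by blast
  qed
  define S where "S = (\<lambda>x. tail (cheb_map p d) x) ` {0..<P}"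
  have finS: "finite S" and neS: "S \<noteq> {}" using P1 by (auto simp: S_def)
  have ub: "s \<le> max (Cd d (p - 1)) (Cd d (p + 1))" if "s \<in> S" for s
  proof -
    from that obtain x where x: "x \<in> {0..<P}" and sx: "s = tail (cheb_map p d) x" unfolding S_def by blast
    obtain r where r: "r dvd p - 1 \<or> r dvd p + 1" and t: "tail (cheb_map p d) x = Cd d r"
      using tx[OF x] by blast
    have n1: "p - 1 \<noteq> 0" and n2: "p + 1 \<noteq> 0" using p2 by auto
    have "Cd d r \<le> Cd d (p - 1) \<or> Cd d r \<le> Cd d (p + 1)"
    proof (cases "r dvd p - 1")
      case True
      then show ?thesis using Cd_mono[OF d True n1] by simp
    next
      case False
      then have "r dvd p + 1" using r by blast
      then show ?thesis using Cd_mono[OF d _ n2] by simp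
    qed
    then show ?thesis using sx t by auto
  qed
  obtain x1 where x1: "x1 \<in> {0..<P}" "tail (cheb_map p d) x1 = Cd d (p - 1)" using sp by blast
  obtain x2 where x2: "x2 \<in> {0..<P}" "tail (cheb_map p d) x2 = Cd d (p + 1)" using sp by blast
  have m1: "Cd d (p - 1) \<in> S" unfolding S_def by (rule image_eqI[where f="\<lambda>x. tail (cheb_map p d) x", OF x1(2)[symmetric] x1(1)])
  have m2: "Cd d (p + 1) \<in> S" unfolding S_def by (rule image_eqI[where f="\<lambda>x. tail (cheb_map p d) x", OF x2(2)[symmetric] x2(1)])
  have mem: "max (Cd d (p - 1)) (Cd d (p + 1)) \<in> S" using m1 m2 by (simp add: max_def)
  have "Max S = max (Cd d (p - 1)) (Cd d (p + 1))" by (rule Max_eqI[OF finS ub mem])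
  then show ?thesis by (simp add: S_def)
qed

end

lemma nonres:
  assumes p: "prime p" and p2: "p > 2"
  shows "\<exists>n::int. [n ^ ((p - 1) div 2) = - 1] (mod int p)"
proof -
  obtain x where x: "residue_primroot p x" using prime_primitive_root_exists[OF _ p] p2 by auto
  then have ox: "ord p x = p - 1" using p by (simp add: residue_primroot_def totient_prime)
  define m where "m = (p - 1) div 2"
  have m0: "0 < m" "m < p - 1" using p2 by (auto simp: m_def)
  have odd: "odd p" using p p2 prime_odd_nat by blast
  have m2: "2 * m = p - 1" using odd by (simp add: m_def)
  have nm: "\<not> [x ^ m = 1] (mod p)" using ord_minimal[OF m0(1)] m0(2) ox by simp
  have "[x ^ (p - 1) = 1] (mod p)" using ord[of x p] ox by simp
  then have c1: "[int x ^ (p - 1) = 1] (mod int p)" by (metis cong_int_iff of_nat_1 of_nat_power)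
  define h where "h = int x ^ m"
  have "h ^ 2 = int x ^ (m * 2)" by (simp add: h_def power_mult)
  also have "m * 2 = p - 1" using m2 by simp
  finally have "h ^ 2 = int x ^ (p - 1)" .
  then have "[h ^ 2 = 1] (mod int p)" using c1 by simp
  then have "int p dvd (h - 1) * (h + 1)" by (simp add: cong_iff_dvd_diff power2_eq_square algebra_simps)
  moreover have "prime (int p)" using p by simp
  ultimately have "int p dvd h - 1 \<or> int p dvd h + 1" using prime_dvd_mult_iff by blast
  moreover have "\<not> int p dvd h - 1"
  proof
    assume "int p dvd h - 1"
    then have "[int (x ^ m) = int 1] (mod int p)" by (simp add: h_def cong_iff_dvd_diff)
    then have "[x ^ m = 1] (mod p)" using cong_int_iff by blast
    then show False using nm by simp
  qed
  ultimately have "int p dvd h - (- 1)" by simp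
  then show ?thesis by (intro exI[of _ "int x"]) (simp add: h_def m_def cong_iff_dvd_diff)
qed

lemma max_Max:
  assumes "finite A" "A \<noteq> {}"
  shows "Max ((\<lambda>q. max (f q) (g q :: nat)) ` A) = max (Max (f ` A)) (Max (g ` A))"
proof -
  have fin: "finite (f ` A)" "finite (g ` A)" "finite ((\<lambda>q. max (f q) (g q)) ` A)" using assms by auto
  have ne: "f ` A \<noteq> {}" "g ` A \<noteq> {}" "(\<lambda>q. max (f q) (g q)) ` A \<noteq> {}" using assms by auto
  show ?thesis
  proof (rule antisym)
    show "Max ((\<lambda>q. max (f q) (g q)) ` A) \<le> max (Max (f ` A)) (Max (g ` A))"
    proof (subst Max_le_iff[OF fin(3) ne(3)], intro ballI)
      fix y assume "y \<in> (\<lambda>q. max (f q) (g q)) ` A"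
      then obtain q where q: "q \<in> A" "y = max (f q) (g q)" by blast
      have "f q \<le> Max (f ` A)" using q(1) by (intro Max_ge[OF fin(1)] imageI)
      have "g q \<le> Max (g ` A)" using q(1) by (intro Max_ge[OF fin(2)] imageI)
      then show "y \<le> max (Max (f ` A)) (Max (g ` A))" using q \<open>f q \<le> Max (f ` A)\<close> by auto
    qed
    have "Max (f ` A) \<le> Max ((\<lambda>q. max (f q) (g q)) ` A)"
    proof (subst Max_le_iff[OF fin(1) ne(1)], intro ballI)
      fix y assume "y \<in> f ` A"
      then obtain q where q: "q \<in> A" "y = f q" by blast
      then have "max (f q) (g q) \<le> Max ((\<lambda>q. max (f q) (g q)) ` A)" by (intro Max_ge[OF fin(3)] imageI)
      then show "y \<le> Max ((\<lambda>q. max (f q) (g q)) ` A)" using q by linarith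
    qed
    moreover have "Max (g ` A) \<le> Max ((\<lambda>q. max (f q) (g q)) ` A)"
    proof (subst Max_le_iff[OF fin(2) ne(2)], intro ballI)
      fix y assume "y \<in> g ` A"
      then obtain q where q: "q \<in> A" "y = g q" by blast
      then have "max (f q) (g q) \<le> Max ((\<lambda>q. max (f q) (g q)) ` A)" by (intro Max_ge[OF fin(3)] imageI)
      then show "y \<le> Max ((\<lambda>q. max (f q) (g q)) ` A)" using q by linarith
    qed
    ultimately show "max (Max (f ` A)) (Max (g ` A)) \<le> Max ((\<lambda>q. max (f q) (g q)) ` A)" by simp
  qed
qed

lemma cheb_even0: "even (poly (cheb k) (0::int))"
  by (induction k rule: cheb.induct) auto

lemma cheb_even1: "even (poly (cheb k) (1::int)) \<longleftrightarrow> 3 dvd k"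
proof (induction k rule: cheb.induct)
  case 1
  show ?case by simp
next
  case 2
  show ?case by simp
next
  case (3 k)
  have "poly (cheb (Suc (Suc k))) 1 = poly (cheb (Suc k)) 1 - poly (cheb k) (1::int)" by simp
  then have "even (poly (cheb (Suc (Suc k))) (1::int)) \<longleftrightarrow>
      (even (poly (cheb (Suc k)) (1::int)) \<longleftrightarrow> even (poly (cheb k) (1::int)))" by simp
  then show ?case using 3 by presburger
qed

lemma prime3: "prime (3::nat)"
proof -
  have "{2..<3::nat} = {2}" by auto
  then show ?thesis by (simp add: prime_nat_iff')
qed

lemma mult3: "prime q \<Longrightarrow> multiplicity q (3::nat) = (if q = 3 then 1 else 0)"
  using prime3 by (auto simp: prime_multiplicity_other)

lemma main_two:
  assumes d: "d > 1"
  shows "Max ((\<lambda>x. tail (cheb_map 2 d) x) ` {0..<int 2}) = max (Cd d 1) (Cd d 3)"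
proof -
  define f where "f = cheb_map 2 d"
  have f0: "f 0 = 0" using cheb_even0[of d] by (simp add: f_def cheb_map_def)
  have f1: "f 1 = (if 3 dvd d then 0 else 1)"
    using cheb_even1[of d] by (auto simp: f_def cheb_map_def even_iff_mod_2_eq_zero odd_iff_mod_2_eq_one)
  have per0: "periodic_pt f 0" unfolding periodic_pt_def using f0 by (intro exI[of _ 1]) auto
  have t0: "tail f 0 = 0" unfolding tail_def using per0 by (intro Least_eq_0) simp
  have C1: "Cd d 1 = 0" using Cd_le[OF d, of 1 0] by simp
  have S: "{0..<int 2} = {0, 1}" by auto
  show ?thesis
  proof (cases "3 dvd d")
    case False
    have per1: "periodic_pt f 1" unfolding periodic_pt_def using f1 False by (intro exI[of _ 1]) auto
    have t1: "tail f 1 = 0" unfolding tail_def using per1 by (intro Least_eq_0) simp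
    have "Cd d 3 \<le> 0"
      using Cd_le[OF d, of 3 0] False by (auto simp: in_prime_factors_iff mult3)
    then show ?thesis using t0 t1 C1 S by (simp add: f_def)
  next
    case True
    have it: "(f ^^ Suc k) 1 = 0" for k
      by (induction k) (use f1 True f0 in auto)
    have np: "\<not> periodic_pt f 1"
    proof
      assume "periodic_pt f 1"
      then obtain k where "k > 0" "(f ^^ k) 1 = 1" unfolding periodic_pt_def by blast
      then show False using it by (cases k) auto
    qed
    have t1: "tail f 1 = 1" unfolding tail_def
    proof (rule Least_equality)
      show "periodic_pt f ((f ^^ 1) 1)" using it[of 0] per0 by simp
      fix m assume "periodic_pt f ((f ^^ m) 1)"
      then show "1 \<le> m" using np by (cases m) auto
    qed
    have 3: "3 \<in> prime_factors d" using True d prime3 by (auto simp: in_prime_factors_iff)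
    have "Cd d 3 \<le> 1"
      using Cd_le[OF d, of 3 1] mult_pos[OF 3] by (auto simp: in_prime_factors_iff mult3)
    moreover have "\<not> Cd d 3 \<le> 0"
      using Cd_le[OF d, of 3 0] 3 prime3 by (auto simp: mult3)
    ultimately have "Cd d 3 = 1" by simp
    then show ?thesis using t0 t1 C1 S by (simp add: f_def)
  qed
qed

theorem mainTheorem6:
  fixes p d :: nat
  assumes "prime p" and "d > 1"
  shows "Max ((\<lambda>x. tail (cheb_map p d) x) ` {0..<int p}) =
         Max ((\<lambda>q. max (nat \<lceil>real (multiplicity q (p - 1)) / real (multiplicity q d)\<rceil>)
                        (nat \<lceil>real (multiplicity q (p + 1)) / real (multiplicity q d)\<rceil>))
              ` prime_factors d)"
proof -
  have RHS: "Max ((\<lambda>q. max (nat \<lceil>real (multiplicity q (p - 1)) / real (multiplicity q d)\<rceil>)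
                        (nat \<lceil>real (multiplicity q (p + 1)) / real (multiplicity q d)\<rceil>))
              ` prime_factors d) = max (Cd d (p - 1)) (Cd d (p + 1))"
    unfolding Cd_def using pf_nonempty[OF assms(2)] by (intro max_Max) auto
  show ?thesis
  proof (cases "p = 2")
    case True
    then show ?thesis using RHS main_two[OF assms(2)] by simp
  next
    case False
    then have p2: "p > 2" using prime_ge_2_nat[OF assms(1)] by linarith
    obtain n where n: "[n ^ ((p - 1) div 2) = - 1] (mod int p)" using nonres[OF assms(1) p2] by blast
    interpret Q: qf p n using assms(1) p2 n by unfold_locales
    show ?thesis using RHS Q.main_odd[OF assms(2)] by simp
  qed
qed

end
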